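(* Let $w\in RH_1$ and for $n\in\mathbb{N}$ define $$w_n(t)=\begin{cases}\frac1n,& w(t)\le\frac1n,\\ w(t),&\frac1n\le w(t)\le n,\\ n,& w(t)\ge n.\end{cases}$$ Then $[w_n]_{RH_1}\le[w]_{RH_1}$. Moreover, for every $w\in A_\infty$ the same truncation satisfies $[w_n]_{A_\infty}\le[w]_{A_\infty}$.
   Context: Weights are locally integrable, a.e. positive functions on $\mathbb{R}$; $\langle f\rangle_J=\frac1{|J|}\int_J f$. $[w]_{RH_1}=\sup_J\Big\langle \frac{w}{\langle w\rangle_J}\log\frac{w}{\langle w\rangle_J}\Big\rangle_J$ and $[w]_{A_\infty}=\sup_J\langle w\rangle_Je^{-\langle\log w\rangle_J}$, suprema over intervals $J\subset\mathbb{R}$; $w\in RH_1$ (resp. $A_\infty$) iff the corresponding constant is finite. *)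

theory Defs
  imports "HOL-Analysis.Analysis"
begin

definition weight :: "(real \<Rightarrow> real) \<Rightarrow> bool" where
  "weight w \<longleftrightarrow> w \<in> borel_measurable lborel
     \<and> (\<forall>a b. set_integrable lborel {a..b} w)
     \<and> (AE x in lborel. 0 < w x)"

text \<open>Extended Lebesgue integral over J (positive part minus negative part, in ereal);
  it equals the usual integral when f is integrable on J, and is +/- infinity when
  exactly one of the parts is infinite.\<close>
definition ext_int :: "real set \<Rightarrow> (real \<Rightarrow> real) \<Rightarrow> ereal" where
  "ext_int J f = enn2ereal (\<integral>\<^sup>+ x\<in>J. ennreal (f x) \<partial>lborel)
               - enn2ereal (\<integral>\<^sup>+ x\<in>J. ennreal (- f x) \<partial>lborel)"

definition avg :: "real \<Rightarrow> real \<Rightarrow> (real \<Rightarrow> real) \<Rightarrow> ereal" where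
  "avg a b f = ext_int {a..b} f / ereal (b - a)"

definition RH1_const :: "(real \<Rightarrow> real) \<Rightarrow> ereal" where
  "RH1_const w = (SUP (a, b) \<in> {(a, b). a < b}.
     avg a b (\<lambda>t. (w t / real_of_ereal (avg a b w)) * ln (w t / real_of_ereal (avg a b w))))"

text \<open>exp(-<log w>_J), with exp(+infinity) = infinity.\<close>
definition Ainf_const :: "(real \<Rightarrow> real) \<Rightarrow> ereal" where
  "Ainf_const w = (SUP (a, b) \<in> {(a, b). a < b}.
     (let L = avg a b (\<lambda>t. ln (w t)) in
      if L = - \<infinity> then \<infinity>
      else avg a b w * ereal (exp (- real_of_ereal L))))"

definition RH1 :: "(real \<Rightarrow> real) \<Rightarrow> bool" where
  "RH1 w \<longleftrightarrow> RH1_const w < \<infinity>"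

definition Ainf :: "(real \<Rightarrow> real) \<Rightarrow> bool" where
  "Ainf w \<longleftrightarrow> Ainf_const w < \<infinity>"

definition trunc :: "nat \<Rightarrow> (real \<Rightarrow> real) \<Rightarrow> real \<Rightarrow> real" where
  "trunc n w t = max (1 / real n) (min (real n) (w t))"

end

theory Submission
  imports Defs
begin


lemma ennreal_ind: "ennreal (f x) * indicator J x = ennreal (indicator J x *\<^sub>R f x)"
  by (simp split: split_indicator)

lemma ennreal_ind2: "ennreal (- f x) * indicator J x = ennreal (- (indicator J x *\<^sub>R f x))"
  by (simp split: split_indicator)

lemma ext_int_real:
  assumes "set_integrable lborel J f"
  shows "ext_int J f = ereal (LINT x:J|lborel. f x)"
proof -
  let ?g = "\<lambda>x. indicator J x *\<^sub>R f x"
  have int: "integrable lborel ?g" using assms by (simp add: set_integrable_def)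
  have P: "(\<integral>\<^sup>+ x\<in>J. ennreal (f x) \<partial>lborel) = (\<integral>\<^sup>+ x. ennreal (?g x) \<partial>lborel)"
    by (rule nn_integral_cong) (rule ennreal_ind)
  have N: "(\<integral>\<^sup>+ x\<in>J. ennreal (- f x) \<partial>lborel) = (\<integral>\<^sup>+ x. ennreal (- ?g x) \<partial>lborel)"
    by (rule nn_integral_cong) (rule ennreal_ind2)
  from int obtain r q where "0 \<le> r" "0 \<le> q"
    "(\<integral>\<^sup>+x. ennreal (?g x)\<partial>lborel) = ennreal r"
    "(\<integral>\<^sup>+x. ennreal (- ?g x)\<partial>lborel) = ennreal q"
    "integral\<^sup>L lborel ?g = r - q" by (rule integrableE)
  then show ?thesis unfolding ext_int_def set_lebesgue_integral_def P N
    by simp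
qed

lemma ext_int_cases:
  assumes "set_borel_measurable lborel J f" "\<not> set_integrable lborel J f"
  shows "(\<integral>\<^sup>+ x\<in>J. ennreal (f x) \<partial>lborel) < \<infinity> \<Longrightarrow> ext_int J f = - \<infinity>"
    and "(\<integral>\<^sup>+ x\<in>J. ennreal (- f x) \<partial>lborel) < \<infinity> \<Longrightarrow> ext_int J f = \<infinity>"
proof -
  let ?g = "\<lambda>x. indicator J x *\<^sub>R f x"
  have m: "?g \<in> borel_measurable lborel" using assms(1) by (simp add: set_borel_measurable_def)
  have ni: "\<not> integrable lborel ?g" using assms(2) by (simp add: set_integrable_def)
  have P: "(\<integral>\<^sup>+ x\<in>J. ennreal (f x) \<partial>lborel) = (\<integral>\<^sup>+ x. ennreal (?g x) \<partial>lborel)"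
    by (rule nn_integral_cong) (rule ennreal_ind)
  have N: "(\<integral>\<^sup>+ x\<in>J. ennreal (- f x) \<partial>lborel) = (\<integral>\<^sup>+ x. ennreal (- ?g x) \<partial>lborel)"
    by (rule nn_integral_cong) (rule ennreal_ind2)
  show "(\<integral>\<^sup>+ x\<in>J. ennreal (f x) \<partial>lborel) < \<infinity> \<Longrightarrow> ext_int J f = - \<infinity>"
  proof -
    assume a: "(\<integral>\<^sup>+ x\<in>J. ennreal (f x) \<partial>lborel) < \<infinity>"
    have "\<not> ((\<integral>\<^sup>+ x. ennreal (?g x) \<partial>lborel) \<noteq> \<infinity> \<and> (\<integral>\<^sup>+ x. ennreal (- ?g x) \<partial>lborel) \<noteq> \<infinity>)"
      using m ni unfolding real_integrable_def by blast
    then have inf: "(\<integral>\<^sup>+ x. ennreal (- ?g x) \<partial>lborel) = \<infinity>"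
      using a P by auto
    obtain r where r: "(\<integral>\<^sup>+ x\<in>J. ennreal (f x) \<partial>lborel) = ennreal r" "0 \<le> r"
      using a by (cases "(\<integral>\<^sup>+ x\<in>J. ennreal (f x) \<partial>lborel)" rule: ennreal_cases) auto
    show ?thesis unfolding ext_int_def N inf r(1) using r(2) by simp
  qed
  show "(\<integral>\<^sup>+ x\<in>J. ennreal (- f x) \<partial>lborel) < \<infinity> \<Longrightarrow> ext_int J f = \<infinity>"
  proof -
    assume a: "(\<integral>\<^sup>+ x\<in>J. ennreal (- f x) \<partial>lborel) < \<infinity>"
    have "\<not> ((\<integral>\<^sup>+ x. ennreal (?g x) \<partial>lborel) \<noteq> \<infinity> \<and> (\<integral>\<^sup>+ x. ennreal (- ?g x) \<partial>lborel) \<noteq> \<infinity>)"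
      using m ni unfolding real_integrable_def by blast
    then have inf: "(\<integral>\<^sup>+ x. ennreal (?g x) \<partial>lborel) = \<infinity>"
      using a N by auto
    obtain r where r: "(\<integral>\<^sup>+ x\<in>J. ennreal (- f x) \<partial>lborel) = ennreal r" "0 \<le> r"
      using a by (cases "(\<integral>\<^sup>+ x\<in>J. ennreal (- f x) \<partial>lborel)" rule: ennreal_cases) auto
    show ?thesis unfolding ext_int_def P inf r(1) using r(2) by simp
  qed
qed


lemma ln_tangent: "(x::real) > 0 \<Longrightarrow> c > 0 \<Longrightarrow> ln x \<le> ln c + x / c - 1"
proof -
  assume x: "x > 0" and c: "c > 0"
  have "ln (x / c) \<le> x / c - 1" using x c ln_le_minus_one[of "x/c"] by simp
  then show ?thesis using x c by (simp add: ln_div)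
qed

lemma pw_ainf:
  fixes w lam c1 c2 :: real
  assumes w: "w > 0" and lam: "lam \<ge> 1" and c1: "c1 > 0" and c2: "c2 > 0"
  shows "ln w - ln (max (1/lam) (min lam w)) \<le>
    (ln c1 + (1 + (w - min lam w)/lam)/c1 - 1) +
    lam * (max (1/lam) (min lam w) * ln c2 + min lam w / c2 - max (1/lam) (min lam w))"
proof -
  define u where "u = min lam w"
  define v where "v = max (1/lam) u"
  have u0: "u > 0" using w lam by (simp add: u_def)
  have v0: "v > 0" using u0 by (simp add: v_def)
  have A: "ln w - ln u \<le> ln c1 + (1 + (w - u)/lam)/c1 - 1"
  proof -
    have "ln w - ln u = ln (1 + (w - u)/lam)"
    proof (cases "w \<le> lam")
      case True then show ?thesis by (simp add: u_def)
    next
      case False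
      then have "u = lam" "1 + (w - u)/lam = w / lam" using lam by (auto simp: u_def field_simps)
      then show ?thesis using w lam by (simp add: ln_div)
    qed
    also have "\<dots> \<le> ln c1 + (1 + (w - u)/lam)/c1 - 1"
    proof (rule ln_tangent[OF _ c1])
      have "w - u \<ge> 0" by (simp add: u_def)
      then show "0 < 1 + (w - u) / lam" using lam by (simp add: add_pos_nonneg)
    qed
    finally show ?thesis .
  qed
  have B: "ln u - ln v \<le> lam * (v * ln c2 + u / c2 - v)"
  proof -
    have "v * (ln u - ln v) \<le> v * (ln c2 + (u/v)/c2 - 1)"
      using v0 u0 c2 ln_tangent[of "u/v" c2] by (intro mult_left_mono) (auto simp: ln_div)
    also have "\<dots> = v * ln c2 + u / c2 - v" using v0 by (simp add: field_simps)
    finally have 1: "v * (ln u - ln v) \<le> v * ln c2 + u / c2 - v" .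
    have "ln u - ln v = lam * (v * (ln u - ln v))"
    proof (cases "u \<le> 1/lam")
      case True then have "v = 1/lam" by (simp add: v_def)
      then show ?thesis using lam by simp
    next
      case False then have "v = u" by (simp add: v_def)
      then show ?thesis by simp
    qed
    also have "\<dots> \<le> lam * (v * ln c2 + u / c2 - v)" using 1 lam by (intro mult_left_mono) auto
    finally show ?thesis .
  qed
  show ?thesis using A B unfolding u_def[symmetric] v_def[symmetric] by linarith
qed

lemma pw_rh:
  fixes w lam A B C :: real
  assumes w: "w > 0" and lam: "lam \<ge> 1" and A: "A > 0" and B: "B > 0" and C: "C > 0"
    and CA: "C \<le> A" and CB: "C \<le> B"
  shows "(max (1/lam) (min lam w) / B) * ln (max (1/lam) (min lam w) / B)
     + ((w/A - min lam w/C) * ln lam + (min lam w/C - max (1/lam) (min lam w)/B) * ln (1/lam)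
        - (w/A - max (1/lam) (min lam w)/B) * ln B + w/A - max (1/lam) (min lam w)/B)
     \<le> (w / A) * ln (w / A)"
proof -
  define u where "u = min lam w"
  define v where "v = max (1/lam) u"
  have u0: "u > 0" using w lam by (simp add: u_def)
  have v0: "v > 0" using u0 by (simp add: v_def)
  have il1: "1/lam \<le> 1" using lam by simp
  have il: "1/lam \<le> lam" using il1 lam by linarith
  define al where "al = w / A"
  define be where "be = v / B"
  define rh where "rh = u / C"
  have al0: "al > 0" using w A by (simp add: al_def)
  have be0: "be > 0" using v0 B by (simp add: be_def)
  have G: "al * ln be + al - be \<le> al * ln al"
  proof -
    have "ln (be/al) \<le> be/al - 1" using al0 be0 ln_le_minus_one[of "be/al"] by simp
    then have "al * (ln be - ln al) \<le> al * (be/al - 1)"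
      using al0 be0 by (intro mult_left_mono) (auto simp: ln_div)
    moreover have "al * (be/al - 1) = be - al" using al0 by (simp add: field_simps)
    ultimately show ?thesis by (simp add: algebra_simps)
  qed
  have P2: "0 \<le> (al - rh) * (ln v - ln lam)"
  proof (cases "w \<le> lam")
    case True
    then have "u = w" by (simp add: u_def)
    then have "al - rh \<le> 0" using w A C CA by (simp add: al_def rh_def frac_le)
    moreover have "ln v \<le> ln lam"
      using lam v0 True \<open>u = w\<close> il by (auto simp: v_def)
    ultimately show ?thesis by (simp add: mult_nonpos_nonpos)
  next
    case False
    then have "v = lam" using lam il by (auto simp: u_def v_def)
    then show ?thesis by simp
  qed
  have P3: "0 \<le> (rh - be) * (ln v - ln (1/lam))"
  proof (cases "u \<le> 1/lam")
    case True
    then have "v = 1/lam" by (simp add: v_def)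
    then show ?thesis by simp
  next
    case False
    then have "v = u" by (simp add: v_def)
    then have "be \<le> rh" using u0 B C CB by (simp add: be_def rh_def frac_le)
    moreover have "ln (1/lam) \<le> ln v" using False \<open>v = u\<close> u0 lam by auto
    ultimately show ?thesis by simp
  qed
  have lnbe: "ln be = ln v - ln B" using v0 B by (simp add: be_def ln_div)
  have "be * ln be + ((al - rh) * ln lam + (rh - be) * ln (1/lam) - (al - be) * ln B + al - be)
      = al * ln be + al - be - (al - rh) * (ln v - ln lam) - (rh - be) * (ln v - ln (1/lam))"
    unfolding lnbe by (simp add: algebra_simps)
  also have "\<dots> \<le> al * ln al" using G P2 P3 by linarith
  finally show ?thesis unfolding al_def be_def rh_def v_def u_def .
qed


lemma bnd_int:
  fixes f :: "real \<Rightarrow> real"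
  assumes "f \<in> borel_measurable lborel" "\<And>x. \<bar>f x\<bar> \<le> B"
  shows "set_integrable lborel {a..b} f"
  unfolding set_integrable_def
  by (rule integrableI_bounded_set_indicator[where B=B]) (use assms in \<open>auto simp: emeasure_lborel_Icc_eq\<close>)

lemma const_int: "set_integrable lborel {a::real..b} (\<lambda>x. c::real)"
  unfolding set_integrable_def
  by (rule integrableI_bounded_set_indicator[where B="\<bar>c\<bar>"]) (auto simp: emeasure_lborel_Icc_eq)

lemma const_integral: "a \<le> b \<Longrightarrow> (LINT x:{a..b}|lborel. (c::real)) = c * (b - a)"
  by (subst set_integral_const) auto

lemma lin3:
  fixes f g h :: "real \<Rightarrow> real"
  assumes ab: "a \<le> b" and fi: "set_integrable lborel {a..b} f"
    and gi: "set_integrable lborel {a..b} g" and hi: "set_integrable lborel {a..b} h"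
  shows "set_integrable lborel {a..b} (\<lambda>x. K + p * f x + q * g x + r * h x)"
    and "(LINT x:{a..b}|lborel. K + p * f x + q * g x + r * h x) =
       K * (b - a) + p * (LINT x:{a..b}|lborel. f x) + q * (LINT x:{a..b}|lborel. g x)
       + r * (LINT x:{a..b}|lborel. h x)"
proof -
  have i1: "set_integrable lborel {a..b} (\<lambda>x. K + p * f x)"
    by (rule set_integral_add(1)[OF const_int set_integrable_mult_right[OF fi]])
  have i2: "set_integrable lborel {a..b} (\<lambda>x. K + p * f x + q * g x)"
    by (rule set_integral_add(1)[OF i1 set_integrable_mult_right[OF gi]])
  show i3: "set_integrable lborel {a..b} (\<lambda>x. K + p * f x + q * g x + r * h x)"
    by (rule set_integral_add(1)[OF i2 set_integrable_mult_right[OF hi]])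
  have "(LINT x:{a..b}|lborel. K + p * f x + q * g x + r * h x) =
     (LINT x:{a..b}|lborel. K + p * f x + q * g x) + (LINT x:{a..b}|lborel. r * h x)"
    by (rule set_integral_add(2)[OF i2 set_integrable_mult_right[OF hi]])
  also have "(LINT x:{a..b}|lborel. K + p * f x + q * g x) =
     (LINT x:{a..b}|lborel. K + p * f x) + (LINT x:{a..b}|lborel. q * g x)"
    by (rule set_integral_add(2)[OF i1 set_integrable_mult_right[OF gi]])
  also have "(LINT x:{a..b}|lborel. K + p * f x) =
     (LINT x:{a..b}|lborel. K) + (LINT x:{a..b}|lborel. p * f x)"
    by (rule set_integral_add(2)[OF const_int set_integrable_mult_right[OF fi]])
  finally show "(LINT x:{a..b}|lborel. K + p * f x + q * g x + r * h x) =
       K * (b - a) + p * (LINT x:{a..b}|lborel. f x) + q * (LINT x:{a..b}|lborel. g x)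
       + r * (LINT x:{a..b}|lborel. h x)" using ab by (simp add: const_integral)
qed

lemma int_pos:
  fixes f :: "real \<Rightarrow> real"
  assumes ab: "a < b" and fi: "set_integrable lborel {a..b} f" and pos: "AE x in lborel. 0 < f x"
  shows "0 < (LINT x:{a..b}|lborel. f x)"
proof -
  let ?g = "\<lambda>x. indicator {a..b} x *\<^sub>R f x"
  have gi: "integrable lborel ?g" using fi by (simp add: set_integrable_def)
  have nn: "AE x in lborel. 0 \<le> ?g x" using pos by eventually_elim (simp split: split_indicator)
  have ge: "0 \<le> (LINT x:{a..b}|lborel. f x)"
    unfolding set_lebesgue_integral_def using nn by (rule integral_nonneg_AE)
  have ne: "(LINT x:{a..b}|lborel. f x) \<noteq> 0"
  proof
    assume "(LINT x:{a..b}|lborel. f x) = 0"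
    then have "AE x in lborel. ?g x = 0"
      using integral_nonneg_eq_0_iff_AE[OF gi nn] by (simp add: set_lebesgue_integral_def)
    then have "AE x in lborel. x \<notin> {a..b}" using pos
      by eventually_elim (auto split: split_indicator)
    then have "emeasure lborel {a..b} = 0"
      by (subst (asm) AE_iff_measurable[of "{a..b}"]) auto
    then show False using ab by simp
  qed
  show ?thesis using ge ne by simp
qed

lemma sbm: "f \<in> borel_measurable lborel \<Longrightarrow> set_borel_measurable lborel {a..b} (f::real \<Rightarrow> real)"
  unfolding set_borel_measurable_def by (intro borel_measurable_scaleR borel_measurable_indicator) auto



lemma core_setup:
  fixes w :: "real \<Rightarrow> real" and n :: nat
  assumes n: "n \<ge> 1" and wm: "w \<in> borel_measurable lborel"
    and wi: "set_integrable lborel {a..b} w"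
  shows "set_integrable lborel {a..b} (\<lambda>x. min (real n) (w x))"
    and "set_integrable lborel {a..b} (trunc n w)"
    and "set_integrable lborel {a..b} (\<lambda>x. ln (trunc n w x))"
    and "\<And>x. 1 / real n \<le> trunc n w x" and "\<And>x. trunc n w x \<le> real n"
    and "\<And>x. trunc n w x = max (1 / real n) (min (real n) (w x))"
proof -
  have lam: "real n \<ge> 1" using n by simp
  have il1: "1 / real n \<le> 1" using lam by simp
  have il: "1 / real n \<le> real n" using il1 lam by linarith
  show tr: "\<And>x. trunc n w x = max (1 / real n) (min (real n) (w x))" by (simp add: trunc_def)
  show lo: "\<And>x. 1 / real n \<le> trunc n w x" by (simp add: trunc_def)
  show hi: "\<And>x. trunc n w x \<le> real n" using il by (simp add: trunc_def)
  have absi: "set_integrable lborel {a..b} (\<lambda>x. \<bar>w x\<bar> + real n)"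
    by (rule set_integral_add(1)[OF set_integrable_abs[OF wi] const_int])
  show "set_integrable lborel {a..b} (\<lambda>x. min (real n) (w x))"
    by (rule set_integrable_bound[OF absi sbm]) (use wm lam in auto)
  show "set_integrable lborel {a..b} (trunc n w)"
  proof (rule bnd_int[where B="real n"])
    show "trunc n w \<in> borel_measurable lborel" unfolding trunc_def[abs_def] using wm by measurable
    show "\<bar>trunc n w x\<bar> \<le> real n" for x
    proof -
      have "0 < 1 / real n" using lam by simp
      then have "0 < trunc n w x" using lo[of x] by linarith
      then show ?thesis using hi[of x] by simp
    qed
  qed
  show "set_integrable lborel {a..b} (\<lambda>x. ln (trunc n w x))"
  proof (rule bnd_int[where B="ln (real n)"])
    show "(\<lambda>x. ln (trunc n w x)) \<in> borel_measurable lborel" unfolding trunc_def using wm by measurable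
    show "\<bar>ln (trunc n w x)\<bar> \<le> ln (real n)" for x
    proof -
      have p: "0 < 1 / real n" using lam by simp
      then have t0: "0 < trunc n w x" using lo[of x] by linarith
      have "ln (1 / real n) \<le> ln (trunc n w x)" using lo[of x] p t0 by simp
      moreover have "ln (trunc n w x) \<le> ln (real n)" using hi[of x] t0 by simp
      moreover have "ln (1 / real n) = - ln (real n)" using lam by (simp add: ln_div)
      ultimately show ?thesis by linarith
    qed
  qed
qed

lemma core_basic:
  fixes w :: "real \<Rightarrow> real" and n :: nat
  assumes ab: "a < b" and n: "n \<ge> 1" and wm: "w \<in> borel_measurable lborel"
    and wi: "set_integrable lborel {a..b} w" and pos: "AE x in lborel. 0 < w x"
  shows "0 < (LINT x:{a..b}|lborel. min (real n) (w x))"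
    and "(LINT x:{a..b}|lborel. min (real n) (w x)) \<le> (LINT x:{a..b}|lborel. w x)"
    and "(LINT x:{a..b}|lborel. min (real n) (w x)) \<le> (LINT x:{a..b}|lborel. trunc n w x)"
    and "(LINT x:{a..b}|lborel. min (real n) (w x)) \<le> real n * (b - a)"
    and "(b - a) / real n \<le> (LINT x:{a..b}|lborel. trunc n w x)"
proof -
  note S = core_setup[OF n wm wi]
  have lam: "real n \<ge> 1" using n by simp
  show "0 < (LINT x:{a..b}|lborel. min (real n) (w x))"
    by (rule int_pos[OF ab S(1)]) (use pos lam in \<open>auto elim!: eventually_mono\<close>)
  show "(LINT x:{a..b}|lborel. min (real n) (w x)) \<le> (LINT x:{a..b}|lborel. w x)"
    by (rule set_integral_mono[OF S(1) wi]) simp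
  show "(LINT x:{a..b}|lborel. min (real n) (w x)) \<le> (LINT x:{a..b}|lborel. trunc n w x)"
    by (rule set_integral_mono[OF S(1) S(2)]) (simp add: trunc_def)
  have "(LINT x:{a..b}|lborel. min (real n) (w x)) \<le> (LINT x:{a..b}|lborel. real n)"
    by (rule set_integral_mono[OF S(1) const_int]) simp
  then show "(LINT x:{a..b}|lborel. min (real n) (w x)) \<le> real n * (b - a)"
    using ab by (simp add: const_integral)
  have "(LINT x:{a..b}|lborel. 1 / real n) \<le> (LINT x:{a..b}|lborel. trunc n w x)"
    by (rule set_integral_mono[OF const_int S(2)]) (rule S(4))
  then show "(b - a) / real n \<le> (LINT x:{a..b}|lborel. trunc n w x)"
    using ab by (simp add: const_integral)
qed

lemma core_ainf:
  fixes w :: "real \<Rightarrow> real" and n :: nat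
  assumes ab: "a < b" and n: "n \<ge> 1" and wm: "w \<in> borel_measurable lborel"
    and wi: "set_integrable lborel {a..b} w" and pos: "AE x in lborel. 0 < w x"
    and lwi: "set_integrable lborel {a..b} (\<lambda>x. ln (w x))"
  shows "(LINT x:{a..b}|lborel. trunc n w x) / (b - a) * exp (- ((LINT x:{a..b}|lborel. ln (trunc n w x)) / (b - a)))
       \<le> (LINT x:{a..b}|lborel. w x) / (b - a) * exp (- ((LINT x:{a..b}|lborel. ln (w x)) / (b - a)))"
proof -
  note S = core_setup[OF n wm wi]
  note Q = core_basic[OF ab n wm wi pos]
  define lam where "lam = real n"
  have lam: "lam \<ge> 1" using n by (simp add: lam_def)
  define L where "L = b - a"
  have L: "L > 0" using ab by (simp add: L_def)
  define Iw where "Iw = (LINT x:{a..b}|lborel. w x)"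
  define Iu where "Iu = (LINT x:{a..b}|lborel. min lam (w x))"
  define Iv where "Iv = (LINT x:{a..b}|lborel. trunc n w x)"
  define Ilw where "Ilw = (LINT x:{a..b}|lborel. ln (w x))"
  define Ilv where "Ilv = (LINT x:{a..b}|lborel. ln (trunc n w x))"
  have Iu0: "Iu > 0" and Iuw: "Iu \<le> Iw" and Iuv: "Iu \<le> Iv" and Iul: "Iu \<le> lam * L"
    and Ivl: "L / lam \<le> Iv"
    using Q unfolding Iu_def Iw_def Iv_def lam_def L_def by auto
  have Iw0: "Iw > 0" using Iu0 Iuw by linarith
  have Iv0: "Iv > 0" using Iu0 Iuv by linarith
  define c1 where "c1 = Iw / Iu"
  define c2 where "c2 = Iu / Iv"
  have c1: "c1 > 0" using Iw0 Iu0 by (simp add: c1_def)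
  have c2: "c2 > 0" using Iv0 Iu0 by (simp add: c2_def)
  define K0 where "K0 = ln c1 + 1 / c1 - 1"
  define k1 where "k1 = 1 / (lam * c1)"
  define k2 where "k2 = lam / c2 - 1 / (lam * c1)"
  define k3 where "k3 = lam * (ln c2 - 1)"
  have li: "set_integrable lborel {a..b} (\<lambda>x. K0 + k1 * w x + k2 * min lam (w x) + k3 * trunc n w x)"
    and lint: "(LINT x:{a..b}|lborel. K0 + k1 * w x + k2 * min lam (w x) + k3 * trunc n w x)
       = K0 * L + k1 * Iw + k2 * Iu + k3 * Iv"
    using lin3[OF _ wi S(1) S(2), of K0 k1 k2 k3] ab unfolding lam_def L_def Iw_def Iu_def Iv_def by auto
  have "(LINT x:{a..b}|lborel. ln (w x) - ln (trunc n w x))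
      \<le> (LINT x:{a..b}|lborel. K0 + k1 * w x + k2 * min lam (w x) + k3 * trunc n w x)"
  proof (rule set_integral_mono_AE[OF set_integral_diff(1)[OF lwi S(3)] li])
    show "AE x\<in>{a..b} in lborel. ln (w x) - ln (trunc n w x)
        \<le> K0 + k1 * w x + k2 * min lam (w x) + k3 * trunc n w x"
      using pos
    proof eventually_elim
      fix x assume wx: "0 < w x"
      have "ln (w x) - ln (trunc n w x) \<le>
        (ln c1 + (1 + (w x - min lam (w x))/lam)/c1 - 1) +
        lam * (max (1/lam) (min lam (w x)) * ln c2 + min lam (w x) / c2 - max (1/lam) (min lam (w x)))"
        using pw_ainf[OF wx lam c1 c2] by (simp add: trunc_def lam_def)
      also have "\<dots> = K0 + k1 * w x + k2 * min lam (w x) + k3 * trunc n w x"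
        using lam c1 c2 unfolding K0_def k1_def k2_def k3_def
        by (simp add: trunc_def lam_def[symmetric] field_simps)
      finally show "x \<in> {a..b} \<longrightarrow> ln (w x) - ln (trunc n w x)
        \<le> K0 + k1 * w x + k2 * min lam (w x) + k3 * trunc n w x" by simp
    qed
  qed
  then have D0: "Ilw - Ilv \<le> K0 * L + k1 * Iw + k2 * Iu + k3 * Iv"
    unfolding lint Ilw_def Ilv_def using set_integral_diff(2)[OF lwi S(3)] by simp
  have E1: "K0 * L + k1 * Iw + k2 * Iu + k3 * Iv
      = L * ln c1 + (L + (Iw - Iu) / lam) / c1 - L + lam * Iv * ln c2"
    using lam c1 c2 Iv0 Iu0 unfolding K0_def k1_def k2_def k3_def c2_def
    by (simp add: field_simps)
  have E2: "(L + (Iw - Iu) / lam) / c1 \<le> L"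
  proof -
    have "(Iw - Iu) * Iu \<le> (Iw - Iu) * (lam * L)"
      using Iuw Iul by (intro mult_left_mono) auto
    then have "(L + (Iw - Iu) / lam) * Iu \<le> L * Iw"
      using lam by (simp add: field_simps)
    then show ?thesis using Iu0 Iw0 unfolding c1_def by (simp add: field_simps)
  qed
  have E3: "lam * Iv * ln c2 \<le> L * ln c2"
  proof -
    have "ln c2 \<le> 0" using Iuv Iu0 Iv0 unfolding c2_def by simp
    moreover have "L \<le> lam * Iv" using Ivl lam by (simp add: field_simps)
    ultimately show ?thesis by (simp add: mult_right_mono_neg)
  qed
  have lnc: "ln c1 + ln c2 = ln Iw - ln Iv"
    using Iu0 Iw0 Iv0 unfolding c1_def c2_def by (simp add: ln_div)
  have D: "Ilw - Ilv \<le> L * (ln Iw - ln Iv)"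
  proof -
    have "L * (ln c1 + ln c2) = L * (ln Iw - ln Iv)" by (simp only: lnc)
    then have "L * ln c1 + L * ln c2 = L * (ln Iw - ln Iv)" by (simp add: distrib_left)
    then show ?thesis using D0 E1 E2 E3 by linarith
  qed
  have ex: "\<And>I Il. I > 0 \<Longrightarrow> I / L * exp (- (Il / L)) = exp (ln I - ln L - Il / L)"
  proof -
    fix I Il :: real assume I: "I > 0"
    have "exp (ln I - ln L - Il / L) = exp (ln I) / exp (ln L) / exp (Il / L)" by (simp only: exp_diff)
    also have "\<dots> = I / L / exp (Il / L)" using I L by simp
    also have "\<dots> = I / L * exp (- (Il / L))" by (simp add: exp_minus divide_inverse)
    finally show "I / L * exp (- (Il / L)) = exp (ln I - ln L - Il / L)" by simp
  qed
  have "ln Iv - ln L - Ilv / L \<le> ln Iw - ln L - Ilw / L"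
  proof -
    have "(Ilw - Ilv) / L \<le> ln Iw - ln Iv" using D L by (simp add: field_simps)
    then show ?thesis by (simp add: diff_divide_distrib)
  qed
  then have "Iv / L * exp (- (Ilv / L)) \<le> Iw / L * exp (- (Ilw / L))"
    using ex[OF Iv0] ex[OF Iw0] by simp
  then show ?thesis unfolding Iv_def Iw_def Ilv_def Ilw_def L_def .
qed



lemma core_rh:
  fixes w :: "real \<Rightarrow> real" and n :: nat
  assumes ab: "a < b" and n: "n \<ge> 1" and wm: "w \<in> borel_measurable lborel"
    and wi: "set_integrable lborel {a..b} w" and pos: "AE x in lborel. 0 < w x"
    and A_def: "A = (LINT x:{a..b}|lborel. w x) / (b - a)"
    and B_def: "B = (LINT x:{a..b}|lborel. trunc n w x) / (b - a)"
    and fi: "set_integrable lborel {a..b} (\<lambda>t. (w t / A) * ln (w t / A))"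
  shows "set_integrable lborel {a..b} (\<lambda>t. (trunc n w t / B) * ln (trunc n w t / B))"
    and "(LINT t:{a..b}|lborel. (trunc n w t / B) * ln (trunc n w t / B))
       \<le> (LINT t:{a..b}|lborel. (w t / A) * ln (w t / A))"
proof -
  note S = core_setup[OF n wm wi]
  note Q = core_basic[OF ab n wm wi pos]
  define lam where "lam = real n"
  have lam: "lam \<ge> 1" using n by (simp add: lam_def)
  define L where "L = b - a"
  have L: "L > 0" using ab by (simp add: L_def)
  define Iw where "Iw = (LINT x:{a..b}|lborel. w x)"
  define Iu where "Iu = (LINT x:{a..b}|lborel. min lam (w x))"
  define Iv where "Iv = (LINT x:{a..b}|lborel. trunc n w x)"
  have Iu0: "Iu > 0" and Iuw: "Iu \<le> Iw" and Iuv: "Iu \<le> Iv"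
    using Q unfolding Iu_def Iw_def Iv_def lam_def L_def by auto
  define C where "C = Iu / L"
  have A: "A = Iw / L" and B: "B = Iv / L" using A_def B_def by (simp_all add: Iw_def Iv_def L_def)
  have C0: "C > 0" using Iu0 L by (simp add: C_def)
  have A0: "A > 0" using Iu0 Iuw L by (simp add: A)
  have B0: "B > 0" using Iu0 Iuv L by (simp add: B)
  have CA: "C \<le> A" using Iuw L by (simp add: A C_def divide_right_mono)
  have CB: "C \<le> B" using Iuv L by (simp add: B C_def divide_right_mono)
  show gi: "set_integrable lborel {a..b} (\<lambda>t. (trunc n w t / B) * ln (trunc n w t / B))"
  proof (rule bnd_int[where B="lam / B * (ln lam + \<bar>ln B\<bar>)"])
    show "(\<lambda>t. trunc n w t / B * ln (trunc n w t / B)) \<in> borel_measurable lborel"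
      unfolding trunc_def using wm by measurable
    show "\<bar>trunc n w x / B * ln (trunc n w x / B)\<bar> \<le> lam / B * (ln lam + \<bar>ln B\<bar>)" for x
    proof -
      have p: "0 < 1 / real n" using lam by (simp add: lam_def)
      then have t0: "0 < trunc n w x" using S(4)[of x] by linarith
      have tl: "trunc n w x \<le> lam" using S(5)[of x] by (simp add: lam_def)
      have "ln (1 / real n) \<le> ln (trunc n w x)" using S(4)[of x] p t0 by simp
      moreover have "ln (trunc n w x) \<le> ln lam" using tl t0 by simp
      moreover have "ln (1 / real n) = - ln lam" using lam by (simp add: ln_div lam_def)
      ultimately have la: "\<bar>ln (trunc n w x)\<bar> \<le> ln lam" by linarith
      have "\<bar>trunc n w x / B * ln (trunc n w x / B)\<bar> = trunc n w x / B * \<bar>ln (trunc n w x) - ln B\<bar>"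
        using t0 B0 by (simp add: ln_div abs_mult)
      also have "\<dots> \<le> lam / B * (ln lam + \<bar>ln B\<bar>)"
      proof (rule mult_mono)
        show "trunc n w x / B \<le> lam / B" using tl B0 by (simp add: divide_right_mono)
        show "\<bar>ln (trunc n w x) - ln B\<bar> \<le> ln lam + \<bar>ln B\<bar>" using la by linarith
        show "0 \<le> lam / B" using lam B0 by simp
      qed simp
      finally show ?thesis .
    qed
  qed
  define k1 where "k1 = (ln lam - ln B + 1) / A"
  define k2 where "k2 = (ln (1/lam) - ln lam) / C"
  define k3 where "k3 = (ln B - ln (1/lam) - 1) / B"
  have hi: "set_integrable lborel {a..b} (\<lambda>x. 0 + k1 * w x + k2 * min lam (w x) + k3 * trunc n w x)"
    and hint: "(LINT x:{a..b}|lborel. 0 + k1 * w x + k2 * min lam (w x) + k3 * trunc n w x)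
       = 0 * L + k1 * Iw + k2 * Iu + k3 * Iv"
    using lin3[OF _ wi S(1) S(2), of 0 k1 k2 k3] ab unfolding lam_def L_def Iw_def Iu_def Iv_def by auto
  have h0: "0 * L + k1 * Iw + k2 * Iu + k3 * Iv = 0"
  proof -
    have "Iw = A * L" "Iu = C * L" "Iv = B * L" using L A B by (simp_all add: C_def)
    then show ?thesis using A0 B0 C0 unfolding k1_def k2_def k3_def by (simp add: field_simps)
  qed
  have "(LINT t:{a..b}|lborel. (trunc n w t / B) * ln (trunc n w t / B)
          + (0 + k1 * w t + k2 * min lam (w t) + k3 * trunc n w t))
       \<le> (LINT t:{a..b}|lborel. (w t / A) * ln (w t / A))"
  proof (rule set_integral_mono_AE[OF set_integral_add(1)[OF gi hi] fi])
    show "AE x\<in>{a..b} in lborel. trunc n w x / B * ln (trunc n w x / B) +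
        (0 + k1 * w x + k2 * min lam (w x) + k3 * trunc n w x) \<le> w x / A * ln (w x / A)"
      using pos
    proof eventually_elim
      fix x assume wx: "0 < w x"
      have "trunc n w x / B * ln (trunc n w x / B) +
        (0 + k1 * w x + k2 * min lam (w x) + k3 * trunc n w x) =
        (max (1/lam) (min lam (w x)) / B) * ln (max (1/lam) (min lam (w x)) / B)
     + ((w x/A - min lam (w x)/C) * ln lam + (min lam (w x)/C - max (1/lam) (min lam (w x))/B) * ln (1/lam)
        - (w x/A - max (1/lam) (min lam (w x))/B) * ln B + w x/A - max (1/lam) (min lam (w x))/B)"
        using A0 B0 C0 unfolding k1_def k2_def k3_def
        by (simp add: trunc_def lam_def[symmetric] field_simps)
      also have "\<dots> \<le> w x / A * ln (w x / A)" by (rule pw_rh[OF wx lam A0 B0 C0 CA CB])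
      finally show "x \<in> {a..b} \<longrightarrow> trunc n w x / B * ln (trunc n w x / B) +
        (0 + k1 * w x + k2 * min lam (w x) + k3 * trunc n w x) \<le> w x / A * ln (w x / A)" by simp
    qed
  qed
  then show "(LINT t:{a..b}|lborel. (trunc n w t / B) * ln (trunc n w t / B))
       \<le> (LINT t:{a..b}|lborel. (w t / A) * ln (w t / A))"
    using set_integral_add(2)[OF gi hi] hint h0 by simp
qed



lemma avg_real:
  assumes "a < b" "set_integrable lborel {a..b} f"
  shows "avg a b f = ereal ((LINT x:{a..b}|lborel. f x) / (b - a))"
  using assms unfolding avg_def by (simp add: ext_int_real)

lemma rh_term:
  fixes w :: "real \<Rightarrow> real" and n :: nat
  assumes ab: "a < b" and n: "n \<ge> 1" and wm: "w \<in> borel_measurable lborel"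
    and wi: "set_integrable lborel {a..b} w" and pos: "AE x in lborel. 0 < w x"
  shows "avg a b (\<lambda>t. (trunc n w t / real_of_ereal (avg a b (trunc n w))) * ln (trunc n w t / real_of_ereal (avg a b (trunc n w))))
    \<le> avg a b (\<lambda>t. (w t / real_of_ereal (avg a b w)) * ln (w t / real_of_ereal (avg a b w)))"
proof -
  note S = core_setup[OF n wm wi]
  note Q = core_basic[OF ab n wm wi pos]
  define A where "A = (LINT x:{a..b}|lborel. w x) / (b - a)"
  define B where "B = (LINT x:{a..b}|lborel. trunc n w x) / (b - a)"
  have aw: "real_of_ereal (avg a b w) = A" using avg_real[OF ab wi] by (simp add: A_def)
  have av: "real_of_ereal (avg a b (trunc n w)) = B" using avg_real[OF ab S(2)] by (simp add: B_def)
  have A0: "A > 0" using Q(1,2) ab unfolding A_def by simp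
  have main: "avg a b (\<lambda>t. (trunc n w t / B) * ln (trunc n w t / B)) \<le> avg a b (\<lambda>t. (w t / A) * ln (w t / A))"
  proof (cases "set_integrable lborel {a..b} (\<lambda>t. (w t / A) * ln (w t / A))")
    case True
    note C = core_rh[OF ab n wm wi pos A_def B_def True]
    show ?thesis unfolding avg_real[OF ab C(1)] avg_real[OF ab True] ereal_less_eq
      by (rule divide_right_mono[OF C(2)]) (use ab in simp)
  next
    case False
    have m: "set_borel_measurable lborel {a..b} (\<lambda>t. (w t / A) * ln (w t / A))"
      by (rule sbm) (use wm in measurable)
    have "(\<integral>\<^sup>+ x\<in>{a..b}. ennreal (- ((w x / A) * ln (w x / A))) \<partial>lborel)
        \<le> (\<integral>\<^sup>+ x. indicator {a..b} x \<partial>lborel)"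
    proof (rule nn_integral_mono_AE)
      show "AE x in lborel. ennreal (- (w x / A * ln (w x / A))) * indicator {a..b} x \<le> indicator {a..b} x"
        using pos
      proof eventually_elim
        fix x assume wx: "0 < w x"
        have y: "w x / A > 0" using wx A0 by simp
        have "ln (A / w x) \<le> A / w x - 1" using wx A0 ln_le_minus_one[of "A / w x"] by simp
        then have "- ln (w x / A) \<le> A / w x - 1" using wx A0 by (simp add: ln_div)
        then have "(w x / A) * (- ln (w x / A)) \<le> (w x / A) * (A / w x - 1)"
          using y by (intro mult_left_mono) auto
        also have "\<dots> = 1 - w x / A" using wx A0 by (simp add: field_simps)
        finally have "- (w x / A * ln (w x / A)) \<le> 1" using y by simp
        then show "ennreal (- (w x / A * ln (w x / A))) * indicator {a..b} x \<le> indicator {a..b} x"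
          by (simp split: split_indicator)
      qed
    qed
    also have "\<dots> < \<infinity>" using ab by (simp add: emeasure_lborel_Icc_eq)
    finally have "ext_int {a..b} (\<lambda>t. (w t / A) * ln (w t / A)) = \<infinity>"
      by (rule ext_int_cases(2)[OF m False])
    then show ?thesis using ab unfolding avg_def by simp
  qed
  show ?thesis unfolding aw av by (rule main)
qed

lemma ainf_term:
  fixes w :: "real \<Rightarrow> real" and n :: nat
  assumes ab: "a < b" and n: "n \<ge> 1" and wm: "w \<in> borel_measurable lborel"
    and wi: "set_integrable lborel {a..b} w" and pos: "AE x in lborel. 0 < w x"
  shows "(let L = avg a b (\<lambda>t. ln (trunc n w t)) in
      if L = - \<infinity> then \<infinity> else avg a b (trunc n w) * ereal (exp (- real_of_ereal L)))
    \<le> (let L = avg a b (\<lambda>t. ln (w t)) in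
      if L = - \<infinity> then \<infinity> else avg a b w * ereal (exp (- real_of_ereal L)))"
proof -
  note S = core_setup[OF n wm wi]
  have lhs: "(let L = avg a b (\<lambda>t. ln (trunc n w t)) in
      if L = - \<infinity> then \<infinity> else avg a b (trunc n w) * ereal (exp (- real_of_ereal L)))
    = ereal ((LINT x:{a..b}|lborel. trunc n w x) / (b - a) * exp (- ((LINT x:{a..b}|lborel. ln (trunc n w x)) / (b - a))))"
    unfolding Let_def avg_real[OF ab S(3)] avg_real[OF ab S(2)] by simp
  have main: "ereal ((LINT x:{a..b}|lborel. trunc n w x) / (b - a) * exp (- ((LINT x:{a..b}|lborel. ln (trunc n w x)) / (b - a))))
    \<le> (let L = avg a b (\<lambda>t. ln (w t)) in
      if L = - \<infinity> then \<infinity> else avg a b w * ereal (exp (- real_of_ereal L)))"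
  proof (cases "set_integrable lborel {a..b} (\<lambda>t. ln (w t))")
    case True
    show ?thesis unfolding Let_def avg_real[OF ab True] avg_real[OF ab wi]
      using core_ainf[OF ab n wm wi pos True] by simp
  next
    case False
    have m: "set_borel_measurable lborel {a..b} (\<lambda>t. ln (w t))"
      by (rule sbm) (use wm in measurable)
    have wi': "integrable lborel (\<lambda>x. indicator {a..b} x *\<^sub>R w x)"
      using wi by (simp add: set_integrable_def)
    have "(\<integral>\<^sup>+ x\<in>{a..b}. ennreal (ln (w x)) \<partial>lborel) \<le> (\<integral>\<^sup>+ x\<in>{a..b}. ennreal (w x) \<partial>lborel)"
    proof (rule nn_integral_mono_AE)
      show "AE x in lborel. ennreal (ln (w x)) * indicator {a..b} x \<le> ennreal (w x) * indicator {a..b} x"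
        using pos
      proof eventually_elim
        fix x assume wx: "0 < w x"
        have "ln (w x) \<le> w x" using ln_le_minus_one[of "w x"] wx by simp
        then show "ennreal (ln (w x)) * indicator {a..b} x \<le> ennreal (w x) * indicator {a..b} x"
          by (simp split: split_indicator add: ennreal_leI)
      qed
    qed
    also have "(\<integral>\<^sup>+ x\<in>{a..b}. ennreal (w x) \<partial>lborel) = (\<integral>\<^sup>+ x. ennreal (indicator {a..b} x *\<^sub>R w x) \<partial>lborel)"
      by (rule nn_integral_cong) (rule ennreal_ind)
    also have "\<dots> < \<infinity>" using integrableD(2)[OF wi'] by (simp add: less_top)
    finally have "ext_int {a..b} (\<lambda>t. ln (w t)) = - \<infinity>"
      by (rule ext_int_cases(1)[OF m False])
    then have "avg a b (\<lambda>t. ln (w t)) = - \<infinity>" using ab unfolding avg_def by simp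
    then show ?thesis by simp
  qed
  show ?thesis unfolding lhs by (rule main)
qed



theorem lemma1:
  fixes w :: "real \<Rightarrow> real" and n :: nat
  assumes "weight w" and "n \<ge> 1"
  shows "(RH1 w \<longrightarrow> RH1_const (trunc n w) \<le> RH1_const w)
       \<and> (Ainf w \<longrightarrow> Ainf_const (trunc n w) \<le> Ainf_const w)"
proof -
  have wm: "w \<in> borel_measurable lborel" and wi: "\<And>a b. set_integrable lborel {a..b} w"
    and pos: "AE x in lborel. 0 < w x" using assms(1) unfolding weight_def by auto
  have R: "RH1_const (trunc n w) \<le> RH1_const w"
    unfolding RH1_const_def
  proof (rule SUP_mono)
    fix p :: "real \<times> real" assume "p \<in> {(a, b). a < b}"
    then obtain a b where p: "p = (a, b)" and ab: "a < b" by auto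
    show "\<exists>m\<in>{(a, b). a < b}.
        (case p of (a, b) \<Rightarrow> avg a b (\<lambda>t. trunc n w t / real_of_ereal (avg a b (trunc n w)) * ln (trunc n w t / real_of_ereal (avg a b (trunc n w)))))
      \<le> (case m of (a, b) \<Rightarrow> avg a b (\<lambda>t. w t / real_of_ereal (avg a b w) * ln (w t / real_of_ereal (avg a b w))))"
      using rh_term[OF ab assms(2) wm wi pos] ab p by auto
  qed
  have A: "Ainf_const (trunc n w) \<le> Ainf_const w"
    unfolding Ainf_const_def
  proof (rule SUP_mono)
    fix p :: "real \<times> real" assume "p \<in> {(a, b). a < b}"
    then obtain a b where p: "p = (a, b)" and ab: "a < b" by auto
    show "\<exists>m\<in>{(a, b). a < b}.
        (case p of (a, b) \<Rightarrow> (let L = avg a b (\<lambda>t. ln (trunc n w t)) in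
      if L = - \<infinity> then \<infinity> else avg a b (trunc n w) * ereal (exp (- real_of_ereal L))))
      \<le> (case m of (a, b) \<Rightarrow> (let L = avg a b (\<lambda>t. ln (w t)) in
      if L = - \<infinity> then \<infinity> else avg a b w * ereal (exp (- real_of_ereal L))))"
      using ainf_term[OF ab assms(2) wm wi pos] ab p by (intro bexI[of _ p]) auto
  qed
  show ?thesis using R A by simp
qed

end
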